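(* Let $\mathbf v=(v_1,\dots,v_m)$ and $\mathbf k=(k_1,\dots,k_m)$ be $m$-tuples of positive integers with $\mathbf v\ge\mathbf k$, where $m\ge2$. Then \[ C(\mathbf v,\mathbf k,2)\ \ge\ \max_{\substack{1\le i,j\le m\\ i\neq j}}\left\lceil\frac{v_i}{k_i}\left\lceil\frac{v_j}{k_j}\right\rceil\right\rceil. \]
   Context: Let $X_1,\dots,X_m$ be pairwise disjoint sets with $|X_i|=v_i$. A block is an $m$-tuple $(B_1,\dots,B_m)$ with $B_i\subseteq X_i$, $|B_i|=k_i$. An $m$-tuple of sets $(T_1,\dots,T_m)$ is $(\mathbf v,\mathbf k,2)$-admissible if $T_i\subseteq X_i$, $|T_i|\le k_i$ and $\sum|T_i|=2$; it is contained in a block if $T_i\subseteq B_i$ for all $i$. A ${\rm GC}(\mathbf v,\mathbf k,2)$ is a finite family (repetitions allowed) of blocks containing every admissible tuple in at least one block; $C(\mathbf v,\mathbf k,2)$ is the minimum number of blocks. *)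

theory Defs
  imports Complex_Main
begin

text \<open>Ground sets: X_i is modelled as {0..<v i} for i \<in> {1..m} (pairwise disjoint
  by being tagged with the index i). An m-tuple of sets is a function
  nat \<Rightarrow> nat set, only the components i \<in> {1..m} being relevant.\<close>

definition is_block :: "nat \<Rightarrow> (nat \<Rightarrow> nat) \<Rightarrow> (nat \<Rightarrow> nat) \<Rightarrow> (nat \<Rightarrow> nat set) \<Rightarrow> bool" where
  "is_block m v k B \<longleftrightarrow> (\<forall>i\<in>{1..m}. B i \<subseteq> {0..<v i} \<and> card (B i) = k i)"

definition admissible2 :: "nat \<Rightarrow> (nat \<Rightarrow> nat) \<Rightarrow> (nat \<Rightarrow> nat) \<Rightarrow> (nat \<Rightarrow> nat set) \<Rightarrow> bool" where
  "admissible2 m v k T \<longleftrightarrow> (\<forall>i\<in>{1..m}. T i \<subseteq> {0..<v i} \<and> card (T i) \<le> k i)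
      \<and> (\<Sum>i=1..m. card (T i)) = 2"

definition contained_in :: "nat \<Rightarrow> (nat \<Rightarrow> nat set) \<Rightarrow> (nat \<Rightarrow> nat set) \<Rightarrow> bool" where
  "contained_in m T B \<longleftrightarrow> (\<forall>i\<in>{1..m}. T i \<subseteq> B i)"

text \<open>A GC(v,k,2): a finite family (list, repetitions allowed) of blocks covering
  every admissible tuple.\<close>
definition is_GC :: "nat \<Rightarrow> (nat \<Rightarrow> nat) \<Rightarrow> (nat \<Rightarrow> nat) \<Rightarrow> (nat \<Rightarrow> nat set) list \<Rightarrow> bool" where
  "is_GC m v k F \<longleftrightarrow> (\<forall>B\<in>set F. is_block m v k B)
     \<and> (\<forall>T. admissible2 m v k T \<longrightarrow> (\<exists>B\<in>set F. contained_in m T B))"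

definition C2 :: "nat \<Rightarrow> (nat \<Rightarrow> nat) \<Rightarrow> (nat \<Rightarrow> nat) \<Rightarrow> nat" where
  "C2 m v k = (LEAST n. \<exists>F. is_GC m v k F \<and> length F = n)"

end

theory Submission
  imports Defs "HOL-Library.FuncSet"
begin

lemma extend_subset:
  assumes "finite A" "T \<subseteq> A" "card T \<le> n" "n \<le> card A"
  shows "\<exists>B. T \<subseteq> B \<and> B \<subseteq> A \<and> card B = n"
proof -
  have "card (A - T) = card A - card T" using assms by (simp add: card_Diff_subset finite_subset)
  then have "n - card T \<le> card (A - T)" using assms by linarith
  then obtain S where S: "S \<subseteq> A - T" "card S = n - card T"
    by (meson obtain_subset_with_card_n)
  have fT: "finite T" using assms finite_subset by blast
  have fS: "finite S" using S assms by (meson finite_Diff finite_subset)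
  have "card (T \<union> S) = card T + card S" using S fT fS by (intro card_Un_disjoint) auto
  then show ?thesis using S assms by (intro exI[of _ "T \<union> S"]) auto
qed

lemma GC_exists:
  assumes "\<forall>i\<in>{1..m}. 0 < k i \<and> k i \<le> v i"
  shows "\<exists>F. is_GC m v k F"
proof -
  define S where "S = {B. is_block m v k B \<and> (\<forall>i. i \<notin> {1..m} \<longrightarrow> B i = undefined)}"
  have "S \<subseteq> PiE {1..m} (\<lambda>i. Pow {0..<v i})"
    unfolding S_def is_block_def PiE_def extensional_def by auto
  then have fin: "finite S" by (rule finite_subset) (intro finite_PiE; auto)
  obtain F where setF: "set F = S" using finite_list[OF fin] by blast
  have "is_GC m v k F"
    unfolding is_GC_def
  proof (intro conjI allI impI)
    show "\<forall>B\<in>set F. is_block m v k B" using setF S_def by auto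
  next
    fix T assume T: "admissible2 m v k T"
    have "\<forall>i\<in>{1..m}. \<exists>Bi. T i \<subseteq> Bi \<and> Bi \<subseteq> {0..<v i} \<and> card Bi = k i"
    proof
      fix i assume i: "i \<in> {1..m}"
      then show "\<exists>Bi. T i \<subseteq> Bi \<and> Bi \<subseteq> {0..<v i} \<and> card Bi = k i"
        using T assms unfolding admissible2_def by (intro extend_subset) auto
    qed
    then obtain g where g: "\<forall>i\<in>{1..m}. T i \<subseteq> g i \<and> g i \<subseteq> {0..<v i} \<and> card (g i) = k i"
      by metis
    define B where "B = (\<lambda>i. if i \<in> {1..m} then g i else undefined)"
    have "B \<in> S" unfolding S_def is_block_def B_def using g by auto
    moreover have "contained_in m T B" unfolding contained_in_def B_def using g by auto
    ultimately show "\<exists>B\<in>set F. contained_in m T B" using setF by auto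
  qed
  then show ?thesis by blast
qed

lemma count_bound:
  assumes GC: "is_GC m v k F" and i: "i \<in> {1..m}" and j: "j \<in> {1..m}" and ij: "i \<noteq> j"
    and pos: "\<forall>i\<in>{1..m}. 0 < k i \<and> k i \<le> v i"
  shows "\<lceil>(real (v i) / real (k i)) * of_int \<lceil>real (v j) / real (k j)\<rceil>\<rceil> \<le> int (length F)"
proof -
  define r where "r = \<lceil>real (v j) / real (k j)\<rceil>"
  define Sx where "Sx = (\<lambda>x. {n. n < length F \<and> x \<in> (F!n) i})"
  have blk: "\<And>n. n < length F \<Longrightarrow> is_block m v k (F!n)" using GC unfolding is_GC_def by auto
  have kpos: "k i > 0" "k j > 0" using pos i j by auto
  have Sx_ge: "r \<le> int (card (Sx x))" if x: "x < v i" for x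
  proof -
    have cov: "{0..<v j} \<subseteq> (\<Union>n\<in>Sx x. (F!n) j)"
    proof
      fix y assume y: "y \<in> {0..<v j}"
      define T where "T = (\<lambda>l. if l = i then {x} else if l = j then {y} else ({}::nat set))"
      have cs: "(\<Sum>l=1..m. card (T l)) = (\<Sum>l=1..m. (if l = i then 1 else 0) + (if l = j then 1 else 0))"
        by (rule sum.cong) (auto simp: T_def ij)
      also have "\<dots> = 2" using i j by (simp add: sum.distrib)
      finally have "admissible2 m v k T" unfolding admissible2_def
        using x y kpos pos by (auto simp: T_def)
      then obtain B where B: "B \<in> set F" "contained_in m T B" using GC unfolding is_GC_def by blast
      then obtain n where n: "n < length F" "F!n = B" by (meson in_set_conv_nth)
      have c: "\<forall>l\<in>{1..m}. T l \<subseteq> B l" using B(2) unfolding contained_in_def .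
      have "x \<in> B i" using c[rule_format, OF i] by (simp add: T_def)
      moreover have "y \<in> B j" using c[rule_format, OF j] ij by (simp add: T_def)
      ultimately have "x \<in> B i" "y \<in> B j" by auto
      then show "y \<in> (\<Union>n\<in>Sx x. (F!n) j)" using n unfolding Sx_def by auto
    qed
    have finSx: "finite (Sx x)" unfolding Sx_def by auto
    have finU: "finite (\<Union>n\<in>Sx x. (F!n) j)"
    proof (rule finite_UN_I[OF finSx])
      fix n assume "n \<in> Sx x"
      then have "(F!n) j \<subseteq> {0..<v j}" using blk j unfolding Sx_def is_block_def by auto
      then show "finite ((F!n) j)" using finite_subset by blast
    qed
    have "v j \<le> card (\<Union>n\<in>Sx x. (F!n) j)"
      using card_mono[OF finU cov] by simp
    also have "\<dots> \<le> (\<Sum>n\<in>Sx x. card ((F!n) j))" by (rule card_UN_le[OF finSx])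
    also have "\<dots> = (\<Sum>n\<in>Sx x. k j)"
      by (rule sum.cong) (use blk j in \<open>auto simp: Sx_def is_block_def\<close>)
    finally have "v j \<le> card (Sx x) * k j" by simp
    then have "real (v j) \<le> real (card (Sx x)) * real (k j)" by (metis of_nat_le_iff of_nat_mult)
    then have "real (v j) / real (k j) \<le> real (card (Sx x))" using kpos by (simp add: divide_le_eq)
    then show ?thesis unfolding r_def by (simp add: ceiling_le_iff)
  qed
  have cardSx: "card (Sx x) = (\<Sum>n<length F. if x \<in> (F!n) i then 1 else 0)" for x
    unfolding Sx_def by (simp add: sum.If_cases lessThan_def Collect_conj_eq)
  have "(\<Sum>x<v i. card (Sx x)) = (\<Sum>n<length F. \<Sum>x<v i. if x \<in> (F!n) i then 1 else 0)"
    unfolding cardSx by (rule sum.swap)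
  also have "\<dots> = (\<Sum>n<length F. k i)"
  proof (rule sum.cong)
    fix n assume "n \<in> {..<length F}"
    then have b: "(F!n) i \<subseteq> {0..<v i}" "card ((F!n) i) = k i" using blk i unfolding is_block_def by auto
    have "(\<Sum>x<v i. if x \<in> (F!n) i then 1 else 0) = card ({..<v i} \<inter> (F!n) i)"
      by (simp add: sum.If_cases)
    also have "{..<v i} \<inter> (F!n) i = (F!n) i" using b by auto
    finally show "(\<Sum>x<v i. if x \<in> (F!n) i then 1 else (0::nat)) = k i" using b by simp
  qed simp
  finally have eq: "(\<Sum>x<v i. card (Sx x)) = length F * k i" by simp
  have "(\<Sum>x<v i. r) \<le> (\<Sum>x<v i. int (card (Sx x)))" by (rule sum_mono) (use Sx_ge in auto)
  also have "\<dots> = int (length F * k i)" using eq by (metis of_nat_sum)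
  finally have "int (v i) * r \<le> int (length F) * int (k i)" by simp
  then have "real (v i) * of_int r \<le> real (length F) * real (k i)"
    by (metis of_int_le_iff of_int_mult of_int_of_nat_eq)
  then have "real (v i) / real (k i) * of_int r \<le> real (length F)"
    using kpos by (simp add: divide_le_eq mult.commute mult.left_commute)
  then show ?thesis unfolding r_def by (simp add: ceiling_le_iff)
qed

theorem corollary5p3:
  fixes m :: nat and v k :: "nat \<Rightarrow> nat"
  assumes "m \<ge> 2"
    and "\<forall>i\<in>{1..m}. 0 < k i \<and> k i \<le> v i"
  shows "int (C2 m v k) \<ge>
    Max {\<lceil>(real (v i) / real (k i)) * of_int \<lceil>real (v j) / real (k j)\<rceil>\<rceil> | i j.
           i \<in> {1..m} \<and> j \<in> {1..m} \<and> i \<noteq> j}"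
proof -
  obtain F0 where "is_GC m v k F0" using GC_exists[OF assms(2)] by blast
  then have ex: "\<exists>n F. is_GC m v k F \<and> length F = n" by blast
  obtain F where F: "is_GC m v k F" "length F = C2 m v k"
    using LeastI_ex[OF ex] unfolding C2_def by blast
  let ?f = "\<lambda>(i,j). \<lceil>(real (v i) / real (k i)) * of_int \<lceil>real (v j) / real (k j)\<rceil>\<rceil>"
  let ?M = "{\<lceil>(real (v i) / real (k i)) * of_int \<lceil>real (v j) / real (k j)\<rceil>\<rceil> | i j.
           i \<in> {1..m} \<and> j \<in> {1..m} \<and> i \<noteq> j}"
  have sub: "?M \<subseteq> ?f ` ({1..m} \<times> {1..m})" by force
  have fin: "finite ?M" by (rule finite_subset[OF sub]) auto
  have "?f (1,2) \<in> ?M" using assms(1) by force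
  then have ne: "?M \<noteq> {}" by blast
  show ?thesis
    using fin ne count_bound[OF F(1) _ _ _ assms(2)] F(2) by (auto simp: Max_le_iff)
qed

end
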